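(* Let $\mathcal{A}=\mathcal{A}(R,\boldsymbol{\sigma},\boldsymbol{t})$ be a twisted generalized Weyl algebra of rank $n$ where $R$ is a principal ideal domain, $t_1,\dots,t_n$ are regular (nonzero) in $R$ and satisfy the consistency equations. Then $\mathcal{A}$, with its $\mathbb{Z}^n$-gradation, is a crystalline graded ring; i.e. for each $g\in\mathbb{Z}^n$ there exists $a_g\in\mathcal{A}_g$ such that $\mathcal{A}_g$ is free of rank one with basis $a_g$ both as a left and as a right $\mathcal{A}_0=R$-module.
   Context: Let $\Bbbk$ be a field, $R$ a unital $\Bbbk$-algebra, $\sigma_1^{1/2},\dots,\sigma_n^{1/2}$ commuting automorphisms of $R$ ($\sigma_i=(\sigma_i^{1/2})^2$), $t_1,\dots,t_n\in Z(R)$. The TGWC $\tilde{\mathcal{A}}(R,\boldsymbol{\sigma},\boldsymbol{t})$ is obtained from $R$ by adjoining $X_1^\pm,\dots,X_n^\pm$ with relations $X_i^\pm r=\sigma_i^{\pm1}(r)X_i^\pm$, $X_i^\pm X_i^\mp=\sigma_i^{\pm1/2}(t_i)$, $[X_i^\pm,X_j^\mp]=0$ ($i\ne j$), $\mathbb{Z}^n$-graded by $\deg r=0$, $\deg X_i^\pm=\pm\mathbf{e}_i$. The TGWA $\mathcal{A}(R,\boldsymbol{\sigma},\boldsymbol{t})$ is $\tilde{\mathcal{A}}$ modulo the sum of all graded ideals intersecting the degree-zero part trivially. Consistency equations: $\sigma_j^{1/2}(t_i)\sigma_i^{1/2}(t_j)=\sigma_j^{-1/2}(t_i)\sigma_i^{-1/2}(t_j)$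 ($i\ne j$) and $\sigma_i^{1/2}\sigma_j^{1/2}(t_k)\sigma_i^{-1/2}\sigma_j^{-1/2}(t_k)=\sigma_i^{1/2}\sigma_j^{-1/2}(t_k)\sigma_i^{-1/2}\sigma_j^{1/2}(t_k)$ ($i,j,k$ pairwise distinct); under these $R$ is identified with $\mathcal{A}_0$. A group-graded ring $D=\bigoplus_{g}D_g$ is crystalline graded if each $D_g$ is free of rank one as a left and as a right $D_e$-module on a common generator $a_g\in D_g$. *)

theory Defs
  imports "HOL-Algebra.Algebra"
begin

definition Zn :: "nat \<Rightarrow> (nat \<Rightarrow> int) set" where
  "Zn n = {g. \<forall>i\<ge>n. g i = 0}"

definition unitv :: "nat \<Rightarrow> nat \<Rightarrow> int" where
  "unitv i = (\<lambda>j. if j = i then 1 else 0)"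

definition zadd :: "(nat \<Rightarrow> int) \<Rightarrow> (nat \<Rightarrow> int) \<Rightarrow> nat \<Rightarrow> int" where
  "zadd g h = (\<lambda>j. g j + h j)"

definition zneg :: "(nat \<Rightarrow> int) \<Rightarrow> nat \<Rightarrow> int" where
  "zneg g = (\<lambda>j. - g j)"

definition zzero :: "nat \<Rightarrow> int" where
  "zzero = (\<lambda>_. 0)"

definition Zn_graded_ring ::
  "('a, 'b) ring_scheme \<Rightarrow> nat \<Rightarrow> ((nat \<Rightarrow> int) \<Rightarrow> 'a set) \<Rightarrow> bool" where
  "Zn_graded_ring A n D \<longleftrightarrow>
     ring A
   \<and> (\<forall>g\<in>Zn n. additive_subgroup (D g) A)
   \<and> (\<forall>g\<in>Zn n. \<forall>h\<in>Zn n. \<forall>x\<in>D g. \<forall>y\<in>D h. x \<otimes>\<^bsub>A\<^esub> y \<in> D (zadd g h))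
   \<and> (\<forall>a\<in>carrier A. \<exists>S c. finite S \<and> S \<subseteq> Zn n \<and> (\<forall>g\<in>S. c g \<in> D g)
                            \<and> a = finsum A c S)
   \<and> (\<forall>S c. finite S \<and> S \<subseteq> Zn n \<and> (\<forall>g\<in>S. c g \<in> D g) \<and> finsum A c S = \<zero>\<^bsub>A\<^esub>
            \<longrightarrow> (\<forall>g\<in>S. c g = \<zero>\<^bsub>A\<^esub>))"

definition Zn_graded_ideal ::
  "('a, 'b) ring_scheme \<Rightarrow> nat \<Rightarrow> ((nat \<Rightarrow> int) \<Rightarrow> 'a set) \<Rightarrow> 'a set \<Rightarrow> bool" where
  "Zn_graded_ideal A n D I \<longleftrightarrow>
     ideal I A
   \<and> (\<forall>S c. finite S \<and> S \<subseteq> Zn n \<and> (\<forall>g\<in>S. c g \<in> D g) \<and> finsum A c S \<in> I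
            \<longrightarrow> (\<forall>g\<in>S. c g \<in> I))"

definition crystalline_graded ::
  "('a, 'b) ring_scheme \<Rightarrow> 'g set \<Rightarrow> 'g \<Rightarrow> ('g \<Rightarrow> 'a set) \<Rightarrow> bool" where
  "crystalline_graded A G e D \<longleftrightarrow>
     (\<forall>g\<in>G. \<exists>a\<in>D g.
        (\<forall>x\<in>D g. \<exists>!r. r \<in> D e \<and> x = r \<otimes>\<^bsub>A\<^esub> a)
      \<and> (\<forall>x\<in>D g. \<exists>!r. r \<in> D e \<and> x = a \<otimes>\<^bsub>A\<^esub> r))"

text \<open>sigma_half i is sigma_i^{1/2}; its inverse sigma_i^{-1/2}.\<close>

definition sig_m :: "('r, 'c) ring_scheme \<Rightarrow> (nat \<Rightarrow> 'r \<Rightarrow> 'r) \<Rightarrow> nat \<Rightarrow> 'r \<Rightarrow> 'r" where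
  "sig_m R sh i = inv_into (carrier R) (sh i)"

definition TGW_datum ::
  "('k, 'd) ring_scheme \<Rightarrow> ('r, 'c) ring_scheme \<Rightarrow> ('k \<Rightarrow> 'r) \<Rightarrow> nat
   \<Rightarrow> (nat \<Rightarrow> 'r \<Rightarrow> 'r) \<Rightarrow> (nat \<Rightarrow> 'r) \<Rightarrow> bool" where
  "TGW_datum K R hK n sh t \<longleftrightarrow>
     field K \<and> ring R \<and> hK \<in> ring_hom K R
   \<and> (\<forall>k\<in>carrier K. \<forall>r\<in>carrier R. hK k \<otimes>\<^bsub>R\<^esub> r = r \<otimes>\<^bsub>R\<^esub> hK k)
   \<and> (\<forall>i<n. sh i \<in> ring_iso R R)
   \<and> (\<forall>i<n. \<forall>k\<in>carrier K. sh i (hK k) = hK k)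
   \<and> (\<forall>i<n. \<forall>j<n. \<forall>r\<in>carrier R. sh i (sh j r) = sh j (sh i r))
   \<and> (\<forall>i<n. t i \<in> carrier R \<and> (\<forall>r\<in>carrier R. t i \<otimes>\<^bsub>R\<^esub> r = r \<otimes>\<^bsub>R\<^esub> t i))"

definition TGW_consistent ::
  "('r, 'c) ring_scheme \<Rightarrow> nat \<Rightarrow> (nat \<Rightarrow> 'r \<Rightarrow> 'r) \<Rightarrow> (nat \<Rightarrow> 'r) \<Rightarrow> bool" where
  "TGW_consistent R n sh t \<longleftrightarrow>
     (\<forall>i<n. \<forall>j<n. i \<noteq> j \<longrightarrow>
        sh j (t i) \<otimes>\<^bsub>R\<^esub> sh i (t j)
        = sig_m R sh j (t i) \<otimes>\<^bsub>R\<^esub> sig_m R sh i (t j))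
   \<and> (\<forall>i<n. \<forall>j<n. \<forall>k<n. i \<noteq> j \<and> j \<noteq> k \<and> i \<noteq> k \<longrightarrow>
        sh i (sh j (t k)) \<otimes>\<^bsub>R\<^esub> sig_m R sh i (sig_m R sh j (t k))
        = sh i (sig_m R sh j (t k)) \<otimes>\<^bsub>R\<^esub> sig_m R sh i (sh j (t k)))"

text \<open>(A, D, rho, Xp, Xm) is (a realisation of) the TGWA A(R,sigma,t):
  a Z^n-graded ring generated by rho(R) (= A_0) and X_i^{+-} of degree +-e_i subject to the
  TGWC relations, such that every nonzero graded ideal meets A_0 nontrivially
  (i.e. the sum of graded ideals meeting the degree zero part trivially has been factored out).\<close>

definition is_TGWA ::
  "('a, 'b) ring_scheme \<Rightarrow> ((nat \<Rightarrow> int) \<Rightarrow> 'a set) \<Rightarrow> ('r \<Rightarrow> 'a) \<Rightarrow> (nat \<Rightarrow> 'a) \<Rightarrow> (nat \<Rightarrow> 'a)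
   \<Rightarrow> ('r, 'c) ring_scheme \<Rightarrow> nat \<Rightarrow> (nat \<Rightarrow> 'r \<Rightarrow> 'r) \<Rightarrow> (nat \<Rightarrow> 'r) \<Rightarrow> bool" where
  "is_TGWA A D rho Xp Xm R n sh t \<longleftrightarrow>
     Zn_graded_ring A n D
   \<and> rho \<in> ring_hom R A \<and> inj_on rho (carrier R) \<and> rho ` carrier R = D zzero
   \<and> (\<forall>i<n. Xp i \<in> D (unitv i) \<and> Xm i \<in> D (zneg (unitv i)))
   \<and> (\<forall>i<n. \<forall>r\<in>carrier R.
         Xp i \<otimes>\<^bsub>A\<^esub> rho r = rho (sh i (sh i r)) \<otimes>\<^bsub>A\<^esub> Xp i
       \<and> Xm i \<otimes>\<^bsub>A\<^esub> rho r = rho (sig_m R sh i (sig_m R sh i r)) \<otimes>\<^bsub>A\<^esub> Xm i)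
   \<and> (\<forall>i<n. Xp i \<otimes>\<^bsub>A\<^esub> Xm i = rho (sh i (t i))
          \<and> Xm i \<otimes>\<^bsub>A\<^esub> Xp i = rho (sig_m R sh i (t i)))
   \<and> (\<forall>i<n. \<forall>j<n. i \<noteq> j \<longrightarrow> Xp i \<otimes>\<^bsub>A\<^esub> Xm j = Xm j \<otimes>\<^bsub>A\<^esub> Xp i)
   \<and> carrier A = generate_ring A (rho ` carrier R \<union> Xp ` {..<n} \<union> Xm ` {..<n})
   \<and> (\<forall>I. Zn_graded_ideal A n D I \<and> I \<inter> D zzero = {\<zero>\<^bsub>A\<^esub>} \<longrightarrow> I = {\<zero>\<^bsub>A\<^esub>})"

end

theory Submission
  imports Defs
begin


locale tgw =
  fixes R :: "('r, 'c) ring_scheme" and n :: nat and sh :: "nat \<Rightarrow> 'r \<Rightarrow> 'r"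
  assumes dom: "domain R"
    and iso: "\<forall>i<n. sh i \<in> ring_iso R R"
    and comm: "\<forall>i<n. \<forall>j<n. \<forall>r\<in>carrier R. sh i (sh j r) = sh j (sh i r)"
begin

abbreviation sm where "sm i \<equiv> sig_m R sh i"

lemma rR: "ring R" using dom domain_def cring_def by blast

lemma sh_bij: "i < n \<Longrightarrow> bij_betw (sh i) (carrier R) (carrier R)"
  using iso by (auto simp: ring_iso_def)
lemma sh_hom: "i < n \<Longrightarrow> sh i \<in> ring_hom R R"
  using iso by (auto simp: ring_iso_def)
lemma sh_closed: "i < n \<Longrightarrow> r \<in> carrier R \<Longrightarrow> sh i r \<in> carrier R"
  by (rule ring_hom_closed[OF sh_hom])
lemma sh_inj: "i < n \<Longrightarrow> inj_on (sh i) (carrier R)"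
  using sh_bij[of i] unfolding bij_betw_def by simp
lemma sh_zero: "i < n \<Longrightarrow> sh i \<zero>\<^bsub>R\<^esub> = \<zero>\<^bsub>R\<^esub>"
  by (rule ring_hom_zero[OF sh_hom rR rR])
lemma sm_closed: "i < n \<Longrightarrow> r \<in> carrier R \<Longrightarrow> sm i r \<in> carrier R"
  unfolding sig_m_def using sh_bij bij_betw_inv_into bij_betwE by metis
lemma sh_sm: "i < n \<Longrightarrow> r \<in> carrier R \<Longrightarrow> sh i (sm i r) = r"
  unfolding sig_m_def using sh_bij by (metis bij_betw_inv_into_right)
lemma sm_sh: "i < n \<Longrightarrow> r \<in> carrier R \<Longrightarrow> sm i (sh i r) = r"
  unfolding sig_m_def using sh_bij by (metis bij_betw_inv_into_left)
lemma zR: "\<zero>\<^bsub>R\<^esub> \<in> carrier R" using rR ring.ring_simprules(2) by blast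
lemma sm_zero: "i < n \<Longrightarrow> sm i \<zero>\<^bsub>R\<^esub> = \<zero>\<^bsub>R\<^esub>"
  using sm_sh[OF _ zR] sh_zero by simp
lemma sm_bij: "i < n \<Longrightarrow> bij_betw (sm i) (carrier R) (carrier R)"
  unfolding sig_m_def using sh_bij bij_betw_inv_into by blast
lemma sh_sm_comm: "i < n \<Longrightarrow> j < n \<Longrightarrow> r \<in> carrier R \<Longrightarrow> sh i (sm j r) = sm j (sh i r)"
proof -
  assume a: "i < n" "j < n" "r \<in> carrier R"
  define x where "x = sm j r"
  have x: "x \<in> carrier R" using a sm_closed x_def by simp
  have "sh j (sh i x) = sh i r" using comm a x x_def sh_sm by metis
  then have "sm j (sh i r) = sh i x" using sm_sh a x sh_closed by metis
  then show ?thesis using x_def by simp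
qed
lemma sm_sm_comm: "i < n \<Longrightarrow> j < n \<Longrightarrow> r \<in> carrier R \<Longrightarrow> sm i (sm j r) = sm j (sm i r)"
proof -
  assume a: "i < n" "j < n" "r \<in> carrier R"
  have c1: "sm i (sm j r) \<in> carrier R" "sm j (sm i r) \<in> carrier R" using a sm_closed by auto
  have "sh i (sh j (sm i (sm j r))) = r"
    using a comm c1 sh_sm sm_closed by metis
  moreover have "sh i (sh j (sm j (sm i r))) = r"
    using a sh_sm sm_closed by simp
  ultimately have "sh j (sm i (sm j r)) = sh j (sm j (sm i r))"
    using sh_inj[OF a(1)] c1 sh_closed a by (metis inj_onD)
  then show ?thesis using sh_inj[OF a(2)] c1 by (metis inj_onD)
qed

definition good :: "('r \<Rightarrow> 'r) \<Rightarrow> bool" where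
  "good f \<longleftrightarrow> bij_betw f (carrier R) (carrier R) \<and> f \<zero>\<^bsub>R\<^esub> = \<zero>\<^bsub>R\<^esub>
     \<and> (\<forall>j<n. \<forall>r\<in>carrier R. f (sh j r) = sh j (f r) \<and> f (sm j r) = sm j (f r))"

lemma good_id: "good id" by (simp add: good_def)
lemma good_comp: "good f \<Longrightarrow> good g \<Longrightarrow> good (f \<circ> g)"
  unfolding good_def
  apply (intro conjI)
  subgoal by (auto intro: bij_betw_trans)
  subgoal by simp
  subgoal by (metis (no_types, lifting) bij_betwE comp_apply)
  done
lemma good_funpow: "good f \<Longrightarrow> good (f ^^ k)"
  by (induct k) (auto simp: good_id good_comp simp del: comp_apply)
lemma good_sh: "i < n \<Longrightarrow> good (sh i)"
  unfolding good_def using sh_bij sh_zero comm sh_sm_comm by simp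
lemma good_sm: "i < n \<Longrightarrow> good (sm i)"
  unfolding good_def using sm_bij sm_zero sm_sm_comm sh_sm_comm by simp
lemma good_closed: "good f \<Longrightarrow> r \<in> carrier R \<Longrightarrow> f r \<in> carrier R"
  unfolding good_def using bij_betwE by blast

definition pw :: "nat \<Rightarrow> int \<Rightarrow> 'r \<Rightarrow> 'r" where
  "pw i k = (if 0 \<le> k then (sh i \<circ> sh i) ^^ nat k else (sm i \<circ> sm i) ^^ nat (-k))"

lemma good_pw: "i < n \<Longrightarrow> good (pw i k)"
  unfolding pw_def using good_funpow good_comp good_sh good_sm by auto

lemma pw_succ: assumes "i < n" "r \<in> carrier R"
  shows "pw i (k + 1) r = sh i (sh i (pw i k r))"
proof (cases "0 \<le> k")
  case True
  then have "nat (k+1) = Suc (nat k)" by simp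
  then show ?thesis using True by (simp add: pw_def)
next
  case False
  then have e: "nat (-k) = Suc (nat (-(k+1)))" by simp
  have c: "((sm i \<circ> sm i) ^^ nat (-(k+1))) r \<in> carrier R"
    using good_closed[OF good_funpow[OF good_comp[OF good_sm good_sm]]] assms by blast
  show ?thesis using False e
    apply (simp add: pw_def del: funpow.simps)
    apply (subst funpow_Suc_right) using c assms by (simp add: sh_sm sm_closed)
qed

lemma pw_pred: assumes "i < n" "r \<in> carrier R"
  shows "pw i (k - 1) r = sm i (sm i (pw i k r))"
proof -
  have c: "pw i (k - 1) r \<in> carrier R" using good_closed good_pw assms by blast
  have "pw i k r = sh i (sh i (pw i (k - 1) r))" using pw_succ[OF assms, of "k-1"] by simp
  then show ?thesis using c assms by (simp add: sm_sh sh_closed)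
qed

lemma good_commute: "good f \<Longrightarrow> i < n \<Longrightarrow> r \<in> carrier R \<Longrightarrow> f (pw i k r) = pw i k (f r)"
proof -
  assume f: "good f" and i: "i < n" and r: "r \<in> carrier R"
  have A: "\<And>m r. r \<in> carrier R \<Longrightarrow> f (((sh i \<circ> sh i) ^^ m) r) = ((sh i \<circ> sh i) ^^ m) (f r)"
  proof -
    fix m r assume "r \<in> carrier R" then show "f (((sh i \<circ> sh i) ^^ m) r) = ((sh i \<circ> sh i) ^^ m) (f r)"
      apply (induct m) using f i good_def sh_closed
      by (auto simp: good_closed[OF good_funpow[OF good_comp[OF good_sh good_sh]]])
  qed
  have B: "\<And>m r. r \<in> carrier R \<Longrightarrow> f (((sm i \<circ> sm i) ^^ m) r) = ((sm i \<circ> sm i) ^^ m) (f r)"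
  proof -
    fix m r assume "r \<in> carrier R" then show "f (((sm i \<circ> sm i) ^^ m) r) = ((sm i \<circ> sm i) ^^ m) (f r)"
      apply (induct m) using f i good_def sm_closed
      by (auto simp: good_closed[OF good_funpow[OF good_comp[OF good_sm good_sm]]])
  qed
  show ?thesis using A B r by (simp add: pw_def)
qed


primrec fl :: "(nat \<Rightarrow> int) \<Rightarrow> nat list \<Rightarrow> 'r \<Rightarrow> 'r" where
  "fl g [] = id"
| "fl g (x # xs) = pw x (g x) \<circ> fl g xs"

definition sg :: "(nat \<Rightarrow> int) \<Rightarrow> 'r \<Rightarrow> 'r" where
  "sg g = fl g [0..<n]"

lemma good_foldr: "set xs \<subseteq> {..<n} \<Longrightarrow> good (fl g xs)"
  by (induct xs) (auto simp: good_id good_comp good_pw simp del: comp_apply)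

lemma good_sg: "good (sg g)"
  unfolding sg_def by (rule good_foldr) auto

lemma sg_closed: "r \<in> carrier R \<Longrightarrow> sg g r \<in> carrier R"
  using good_closed good_sg by blast

lemma sg_zzero: "sg zzero r = r"
proof -
  have "\<And>xs. fl zzero xs = id"
    subgoal for xs by (induct xs) (auto simp: zzero_def pw_def)
    done
  then show ?thesis by (simp add: sg_def)
qed

lemma foldr_step:
  assumes "distinct xs" "set xs \<subseteq> {..<n}" "i \<in> set xs" "\<forall>j. j \<noteq> i \<longrightarrow> g' j = g j"
    and "\<forall>r\<in>carrier R. pw i (g' i) r = h (pw i (g i) r)"
    and "\<forall>f. good f \<longrightarrow> (\<forall>r\<in>carrier R. f (h r) = h (f r))"
    and "r \<in> carrier R"
  shows "fl g' xs r = h (fl g xs r)"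
  using assms(1-3)
proof (induct xs)
  case Nil then show ?case by simp
next
  case (Cons x xs)
  show ?case
  proof (cases "x = i")
    case True
    then have "i \<notin> set xs" using Cons by auto
    then have e: "fl g' xs = fl g xs"
      using assms(4) by (induct xs) auto
    have c: "fl g xs r \<in> carrier R"
      using good_closed[OF good_foldr] Cons assms(7) by auto
    show ?thesis using True e assms(5) c by simp
  next
    case False
    then have ih: "fl g' xs r = h (fl g xs r)"
      using Cons by auto
    have c: "fl g xs r \<in> carrier R"
      using good_closed[OF good_foldr] Cons assms(7) by auto
    have x: "x < n" using Cons by auto
    have g: "g' x = g x" using False assms(4) by auto
    show ?thesis using ih c assms(6) good_pw[OF x] g by simp
  qed
qed

lemma good_h1: "i < n \<Longrightarrow> good f \<Longrightarrow> r \<in> carrier R \<Longrightarrow> f (sh i (sh i r)) = sh i (sh i (f r))"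
  unfolding good_def using sh_closed by simp
lemma good_h2: "i < n \<Longrightarrow> good f \<Longrightarrow> r \<in> carrier R \<Longrightarrow> f (sm i (sm i r)) = sm i (sm i (f r))"
  unfolding good_def using sm_closed by simp

lemma sg_plus: assumes "i < n" "r \<in> carrier R"
  shows "sg (zadd (unitv i) g) r = sh i (sh i (sg g r))"
  unfolding sg_def
  apply (rule foldr_step[where h = "\<lambda>r. sh i (sh i r)"])
  using assms good_h1 pw_succ[OF assms(1), of _ "g i"]
  by (auto simp: zadd_def unitv_def add.commute)

lemma sg_minus: assumes "i < n" "r \<in> carrier R"
  shows "sg (zadd (zneg (unitv i)) g) r = sm i (sm i (sg g r))"
  unfolding sg_def
  apply (rule foldr_step[where h = "\<lambda>r. sm i (sm i r)"])
  using assms good_h2 pw_pred[OF assms(1), of _ "g i"]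
  by (auto simp: zadd_def unitv_def zneg_def)

end

lemma Zn_zzero: "zzero \<in> Zn n" by (simp add: Zn_def zzero_def)
lemma Zn_unitv: "i < n \<Longrightarrow> unitv i \<in> Zn n" by (simp add: Zn_def unitv_def)
lemma Zn_zadd: "g \<in> Zn n \<Longrightarrow> h \<in> Zn n \<Longrightarrow> zadd g h \<in> Zn n" by (simp add: Zn_def zadd_def)
lemma Zn_zneg: "g \<in> Zn n \<Longrightarrow> zneg g \<in> Zn n" by (simp add: Zn_def zneg_def)
lemma zadd_zzero[simp]: "zadd zzero g = g" "zadd g zzero = g" by (auto simp: zadd_def zzero_def)
lemma zadd_zneg[simp]: "zadd g (zneg g) = zzero" "zadd (zneg g) g = zzero" by (auto simp: zadd_def zzero_def zneg_def)
lemma zadd_assoc: "zadd (zadd a b) c = zadd a (zadd b c)" by (auto simp: zadd_def)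
lemma zadd_cancel[simp]: "zadd (zneg d) (zadd d g) = g" by (auto simp: zadd_def zneg_def)
lemma zneg_zadd: "zneg (zadd a b) = zadd (zneg a) (zneg b)" by (auto simp: zadd_def zneg_def)
lemma zneg_zzero[simp]: "zneg zzero = zzero" by (auto simp: zneg_def zzero_def)

locale tgwa = tgw R n sh for R :: "('r, 'c) ring_scheme" and n sh +
  fixes A :: "('a, 'b) ring_scheme" (structure)
    and D rho Xp Xm t
  assumes TG: "is_TGWA A D rho Xp Xm R n sh t"
    and tnz: "\<forall>i<n. t i \<noteq> \<zero>\<^bsub>R\<^esub>"
    and tcar: "\<forall>i<n. t i \<in> carrier R"
begin

lemmas T0 = TG[unfolded is_TGWA_def]
lemmas T1 = T0[THEN conjunct2] lemmas T2 = T1[THEN conjunct2] lemmas T3 = T2[THEN conjunct2]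
lemmas T4 = T3[THEN conjunct2] lemmas T5 = T4[THEN conjunct2] lemmas T6 = T5[THEN conjunct2]
lemmas T7 = T6[THEN conjunct2] lemmas T8 = T7[THEN conjunct2] lemmas T9 = T8[THEN conjunct2]
lemma GR: "Zn_graded_ring A n D" using T0 by (rule conjunct1)
lemmas G0 = GR[unfolded Zn_graded_ring_def]
lemmas G1 = G0[THEN conjunct2] lemmas G2 = G1[THEN conjunct2] lemmas G3 = G2[THEN conjunct2]
lemmas G4 = G3[THEN conjunct2]
lemma rA: "ring A" using G0 by (rule conjunct1)
sublocale A: ring A by (rule rA)
lemma cR: "cring R" using dom domain_def by blast
sublocale R: domain R by (rule dom)

lemma Dsub: "g \<in> Zn n \<Longrightarrow> additive_subgroup (D g) A" using G1[THEN conjunct1] by blast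
lemma Dcar: "g \<in> Zn n \<Longrightarrow> x \<in> D g \<Longrightarrow> x \<in> carrier A"
  using additive_subgroup.a_subset[OF Dsub] by blast
lemma Dzero: "g \<in> Zn n \<Longrightarrow> \<zero> \<in> D g" using additive_subgroup.zero_closed[OF Dsub] by blast
lemma Dadd: "g \<in> Zn n \<Longrightarrow> x \<in> D g \<Longrightarrow> y \<in> D g \<Longrightarrow> x \<oplus> y \<in> D g"
  using additive_subgroup.a_closed[OF Dsub] by blast
lemma Dneg: "g \<in> Zn n \<Longrightarrow> x \<in> D g \<Longrightarrow> \<ominus> x \<in> D g"
  using additive_subgroup.a_inv_closed[OF Dsub] by blast
lemma Dminus: "g \<in> Zn n \<Longrightarrow> x \<in> D g \<Longrightarrow> y \<in> D g \<Longrightarrow> x \<ominus> y \<in> D g"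
  unfolding a_minus_def by (intro Dadd Dneg)
lemma Dmult: "g \<in> Zn n \<Longrightarrow> h \<in> Zn n \<Longrightarrow> x \<in> D g \<Longrightarrow> y \<in> D h \<Longrightarrow> x \<otimes> y \<in> D (zadd g h)"
  using G2[THEN conjunct1] by blast
lemma Ddecomp: "a \<in> carrier A \<Longrightarrow> \<exists>S c. finite S \<and> S \<subseteq> Zn n \<and> (\<forall>g\<in>S. c g \<in> D g) \<and> a = finsum A c S"
  using G3[THEN conjunct1] by blast
lemma Dindep: "finite S \<Longrightarrow> S \<subseteq> Zn n \<Longrightarrow> (\<forall>g\<in>S. c g \<in> D g) \<Longrightarrow> finsum A c S = \<zero> \<Longrightarrow> g \<in> S \<Longrightarrow> c g = \<zero>"
  using G4 by blast

lemma rho_hom: "rho \<in> ring_hom R A" using T1[THEN conjunct1] by blast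
lemma rho_inj: "inj_on rho (carrier R)" using T2[THEN conjunct1] by blast
lemma rho_img: "rho ` carrier R = D zzero" using T3[THEN conjunct1] by blast
lemma rho_car: "r \<in> carrier R \<Longrightarrow> rho r \<in> carrier A" by (rule ring_hom_closed[OF rho_hom])
lemma rho_mult: "r \<in> carrier R \<Longrightarrow> s \<in> carrier R \<Longrightarrow> rho (r \<otimes>\<^bsub>R\<^esub> s) = rho r \<otimes> rho s"
  by (rule ring_hom_mult[OF rho_hom])
lemma rho_add: "r \<in> carrier R \<Longrightarrow> s \<in> carrier R \<Longrightarrow> rho (r \<oplus>\<^bsub>R\<^esub> s) = rho r \<oplus> rho s"
  by (rule ring_hom_add[OF rho_hom])
lemma rho_one: "rho \<one>\<^bsub>R\<^esub> = \<one>" by (rule ring_hom_one[OF rho_hom])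
lemma rho_zero: "rho \<zero>\<^bsub>R\<^esub> = \<zero>" by (rule ring_hom_zero[OF rho_hom rR rA])
lemma rho_D: "r \<in> carrier R \<Longrightarrow> rho r \<in> D zzero" using rho_img by blast
lemma rho_eq0: "r \<in> carrier R \<Longrightarrow> rho r = \<zero> \<Longrightarrow> r = \<zero>\<^bsub>R\<^esub>"
  using rho_inj rho_zero by (metis R.zero_closed inj_onD)
lemma rho_comm: "r \<in> carrier R \<Longrightarrow> s \<in> carrier R \<Longrightarrow> rho r \<otimes> rho s = rho s \<otimes> rho r"
  by (metis rho_mult R.m_comm)
lemma one_D: "\<one> \<in> D zzero" using rho_D[OF R.one_closed] rho_one by simp

lemma Xp_D: "i < n \<Longrightarrow> Xp i \<in> D (unitv i)" using T4[THEN conjunct1] by blast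
lemma Xm_D: "i < n \<Longrightarrow> Xm i \<in> D (zneg (unitv i))" using T4[THEN conjunct1] by blast
lemma Xp_car: "i < n \<Longrightarrow> Xp i \<in> carrier A" using Dcar[OF Zn_unitv Xp_D] .
lemma Xm_car: "i < n \<Longrightarrow> Xm i \<in> carrier A" using Dcar[OF Zn_zneg[OF Zn_unitv] Xm_D] .
lemma Xp_rho: "i < n \<Longrightarrow> r \<in> carrier R \<Longrightarrow> Xp i \<otimes> rho r = rho (sh i (sh i r)) \<otimes> Xp i"
  using T5[THEN conjunct1] by blast
lemma Xm_rho: "i < n \<Longrightarrow> r \<in> carrier R \<Longrightarrow> Xm i \<otimes> rho r = rho (sm i (sm i r)) \<otimes> Xm i"
  using T5[THEN conjunct1] by blast
lemma XpXm: "i < n \<Longrightarrow> Xp i \<otimes> Xm i = rho (sh i (t i))" using T6[THEN conjunct1] by blast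
lemma XmXp: "i < n \<Longrightarrow> Xm i \<otimes> Xp i = rho (sm i (t i))" using T6[THEN conjunct1] by blast
lemma gen: "carrier A = generate_ring A (rho ` carrier R \<union> Xp ` {..<n} \<union> Xm ` {..<n})"
  using T8[THEN conjunct1] by blast
lemma maxl: "Zn_graded_ideal A n D I \<Longrightarrow> I \<inter> D zzero = {\<zero>} \<Longrightarrow> I = {\<zero>}"
  using T9 by blast

end

context tgwa begin

definition Cg :: "(nat \<Rightarrow> int) \<Rightarrow> 'a set" where
  "Cg g = {y \<in> D g. \<forall>r\<in>carrier R. y \<otimes> rho r = rho (sg g r) \<otimes> y}"

definition Pp :: "'a \<Rightarrow> bool" where
  "Pp z \<longleftrightarrow> (\<exists>S c. finite S \<and> S \<subseteq> Zn n \<and> (\<forall>g\<in>S. c g \<in> Cg g) \<and> z = finsum A c S)"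

lemma Cg_D: "y \<in> Cg g \<Longrightarrow> y \<in> D g" by (simp add: Cg_def)
lemma Cg_car: "g \<in> Zn n \<Longrightarrow> y \<in> Cg g \<Longrightarrow> y \<in> carrier A" using Cg_D Dcar by blast
lemma Cg_rho: "y \<in> Cg g \<Longrightarrow> r \<in> carrier R \<Longrightarrow> y \<otimes> rho r = rho (sg g r) \<otimes> y" by (simp add: Cg_def)

lemma Cg_zero: "g \<in> Zn n \<Longrightarrow> \<zero> \<in> Cg g"
  unfolding Cg_def using Dzero rho_car sg_closed by simp

lemma Cg_add: assumes g: "g \<in> Zn n" and "x \<in> Cg g" "y \<in> Cg g" shows "x \<oplus> y \<in> Cg g"
proof -
  have x: "x \<in> carrier A" "y \<in> carrier A" using assms Cg_car by auto
  show ?thesis unfolding Cg_def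
  proof (intro CollectI conjI ballI)
    show "x \<oplus> y \<in> D g" using assms Dadd Cg_D by blast
    fix r assume r: "r \<in> carrier R"
    have "(x \<oplus> y) \<otimes> rho r = x \<otimes> rho r \<oplus> y \<otimes> rho r" using x r rho_car A.l_distr by simp
    also have "\<dots> = rho (sg g r) \<otimes> x \<oplus> rho (sg g r) \<otimes> y" using assms r Cg_rho by simp
    also have "\<dots> = rho (sg g r) \<otimes> (x \<oplus> y)" using x r rho_car sg_closed A.r_distr by simp
    finally show "(x \<oplus> y) \<otimes> rho r = rho (sg g r) \<otimes> (x \<oplus> y)" .
  qed
qed

lemma Cg_neg: assumes g: "g \<in> Zn n" and "x \<in> Cg g" shows "\<ominus> x \<in> Cg g"
proof -
  have x: "x \<in> carrier A" using assms Cg_car by auto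
  show ?thesis unfolding Cg_def
  proof (intro CollectI conjI ballI)
    show "\<ominus> x \<in> D g" using assms Dneg Cg_D by blast
    fix r assume r: "r \<in> carrier R"
    have "(\<ominus> x) \<otimes> rho r = \<ominus> (x \<otimes> rho r)" using x r rho_car A.l_minus by simp
    also have "\<dots> = \<ominus> (rho (sg g r) \<otimes> x)" using assms r Cg_rho by simp
    also have "\<dots> = rho (sg g r) \<otimes> (\<ominus> x)" using x r rho_car sg_closed A.r_minus by simp
    finally show "(\<ominus> x) \<otimes> rho r = rho (sg g r) \<otimes> (\<ominus> x)" .
  qed
qed

lemma Pp_car: "Pp z \<Longrightarrow> z \<in> carrier A"
  unfolding Pp_def using Cg_car by (auto intro!: A.finsum_closed)

lemma Pp_zero: "Pp \<zero>"
  unfolding Pp_def by (rule exI[of _ "{}"]) auto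

lemma Pp_single: "g \<in> Zn n \<Longrightarrow> y \<in> Cg g \<Longrightarrow> Pp y"
  unfolding Pp_def
  apply (rule exI[of _ "{g}"], rule exI[of _ "\<lambda>_. y"])
  using Cg_car by (simp add: A.finsum_insert)

lemma Pp_neg: assumes "Pp z" shows "Pp (\<ominus> z)"
proof -
  obtain S c where S: "finite S" "S \<subseteq> Zn n" "\<forall>g\<in>S. c g \<in> Cg g" "z = finsum A c S"
    using assms unfolding Pp_def by blast
  have cc: "c \<in> S \<rightarrow> carrier A" using S Cg_car by auto
  have "\<ominus> z = finsum A (\<lambda>g. \<ominus> c g) S"
    using S(1) cc unfolding S(4)
  proof (induct S rule: finite_induct)
    case empty then show ?case by simp
  next
    case (insert x F)
    then have cx: "c x \<in> carrier A" and cF: "c \<in> F \<rightarrow> carrier A" by auto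
    have "\<ominus> finsum A c (insert x F) = \<ominus> (c x \<oplus> finsum A c F)"
      using insert cx cF by (simp add: A.finsum_insert)
    also have "\<dots> = \<ominus> c x \<oplus> \<ominus> finsum A c F"
      using cx cF A.finsum_closed A.minus_add by blast
    also have "\<dots> = finsum A (\<lambda>g. \<ominus> c g) (insert x F)"
      using insert cx cF by (simp add: A.finsum_insert Pi_def)
    finally show ?case .
  qed
  then show ?thesis unfolding Pp_def
    by (intro exI[of _ S] exI[of _ "\<lambda>g. \<ominus> c g"]) (use S Cg_neg in blast)
qed

lemma Pp_add: assumes "Pp z1" "Pp z2" shows "Pp (z1 \<oplus> z2)"
proof -
  obtain S1 c1 where S1: "finite S1" "S1 \<subseteq> Zn n" "\<forall>g\<in>S1. c1 g \<in> Cg g" "z1 = finsum A c1 S1"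
    using assms unfolding Pp_def by blast
  obtain S2 c2 where S2: "finite S2" "S2 \<subseteq> Zn n" "\<forall>g\<in>S2. c2 g \<in> Cg g" "z2 = finsum A c2 S2"
    using assms unfolding Pp_def by blast
  define d1 where "d1 g = (if g \<in> S1 then c1 g else \<zero>)" for g
  define d2 where "d2 g = (if g \<in> S2 then c2 g else \<zero>)" for g
  let ?S = "S1 \<union> S2"
  have fin: "finite ?S" using S1 S2 by simp
  have d1c: "\<forall>g\<in>?S. d1 g \<in> Cg g" using S1 S2 Cg_zero d1_def by auto
  have d2c: "\<forall>g\<in>?S. d2 g \<in> Cg g" using S1 S2 Cg_zero d2_def by auto
  have d1a: "d1 \<in> ?S \<rightarrow> carrier A" using d1c S1 S2 Cg_car by blast
  have d2a: "d2 \<in> ?S \<rightarrow> carrier A" using d2c S1 S2 Cg_car by blast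
  have e1: "finsum A c1 S1 = finsum A d1 ?S"
    by (rule A.add.finprod_mono_neutral_cong_left) (use fin d1a in \<open>auto simp: d1_def\<close>)
  have e2: "finsum A c2 S2 = finsum A d2 ?S"
    by (rule A.add.finprod_mono_neutral_cong_left) (use fin d2a in \<open>auto simp: d2_def\<close>)
  have "z1 \<oplus> z2 = finsum A (\<lambda>g. d1 g \<oplus> d2 g) ?S"
    using S1(4) S2(4) e1 e2 A.finsum_addf[OF d1a d2a] by simp
  moreover have "\<forall>g\<in>?S. d1 g \<oplus> d2 g \<in> Cg g" using d1c d2c Cg_add S1 S2 by blast
  ultimately show ?thesis unfolding Pp_def
    by (intro exI[of _ ?S] exI[of _ "\<lambda>g. d1 g \<oplus> d2 g"]) (use fin S1 S2 in blast)
qed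

lemma Pp_lmult:
  assumes x: "x \<in> carrier A" and d: "d \<in> Zn n"
    and H: "\<forall>g\<in>Zn n. \<forall>y\<in>Cg g. x \<otimes> y \<in> Cg (zadd d g)"
    and "Pp w"
  shows "Pp (x \<otimes> w)"
proof -
  obtain S c where S: "finite S" "S \<subseteq> Zn n" "\<forall>g\<in>S. c g \<in> Cg g" "w = finsum A c S"
    using assms unfolding Pp_def by blast
  have cc: "c \<in> S \<rightarrow> carrier A" using S Cg_car by auto
  define c' where "c' h = x \<otimes> c (zadd (zneg d) h)" for h
  have inj: "inj_on (zadd d) S" by (rule inj_onI) (metis zadd_cancel)
  have "x \<otimes> w = finsum A (\<lambda>g. x \<otimes> c g) S" using A.finsum_rdistr[OF S(1) x cc] S(4) by simp
  also have "\<dots> = finsum A (\<lambda>g. c' (zadd d g)) S" by (simp add: c'_def)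
  also have "\<dots> = finsum A c' (zadd d ` S)"
    by (rule A.finsum_reindex[symmetric]) (use inj cc x in \<open>auto simp: c'_def\<close>)
  finally have e: "x \<otimes> w = finsum A c' (zadd d ` S)" .
  have "\<forall>h\<in>zadd d ` S. c' h \<in> Cg h" using H S(2,3) c'_def by auto
  moreover have "zadd d ` S \<subseteq> Zn n" using S(2) d Zn_zadd by auto
  ultimately show ?thesis unfolding Pp_def
    by (intro exI[of _ "zadd d ` S"] exI[of _ c']) (use e S(1) in blast)
qed


lemma one_Cg: "\<one> \<in> Cg zzero"
  unfolding Cg_def using one_D rho_car by (simp add: sg_zzero)

definition Hx :: "'a \<Rightarrow> (nat \<Rightarrow> int) \<Rightarrow> bool" where
  "Hx x d \<longleftrightarrow> x \<in> carrier A \<and> d \<in> Zn n \<and> (\<forall>g\<in>Zn n. \<forall>y\<in>Cg g. x \<otimes> y \<in> Cg (zadd d g))"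

lemma Hx_rho: assumes s: "s \<in> carrier R" shows "Hx (rho s) zzero"
  unfolding Hx_def
proof (intro conjI ballI)
  show "rho s \<in> carrier A" using rho_car s .
  show "zzero \<in> Zn n" by (rule Zn_zzero)
  fix g y assume g: "g \<in> Zn n" and y: "y \<in> Cg g"
  have yc: "y \<in> carrier A" using Cg_car g y .
  show "rho s \<otimes> y \<in> Cg (zadd zzero g)" unfolding Cg_def
  proof (intro CollectI conjI ballI)
    show "rho s \<otimes> y \<in> D (zadd zzero g)" using Dmult[OF Zn_zzero g rho_D[OF s] Cg_D[OF y]] .
    fix r assume r: "r \<in> carrier R"
    have "rho s \<otimes> y \<otimes> rho r = rho s \<otimes> (y \<otimes> rho r)" using s r yc rho_car A.m_assoc by simp
    also have "\<dots> = rho s \<otimes> (rho (sg g r) \<otimes> y)" using Cg_rho[OF y r] by simp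
    also have "\<dots> = (rho s \<otimes> rho (sg g r)) \<otimes> y" using s r yc rho_car sg_closed A.m_assoc by simp
    also have "\<dots> = (rho (sg g r) \<otimes> rho s) \<otimes> y" using rho_comm s r sg_closed by simp
    also have "\<dots> = rho (sg (zadd zzero g) r) \<otimes> (rho s \<otimes> y)" using s r yc rho_car sg_closed A.m_assoc by simp
    finally show "rho s \<otimes> y \<otimes> rho r = rho (sg (zadd zzero g) r) \<otimes> (rho s \<otimes> y)" .
  qed
qed

lemma Hx_Xp: assumes i: "i < n" shows "Hx (Xp i) (unitv i)"
  unfolding Hx_def
proof (intro conjI ballI)
  show "Xp i \<in> carrier A" using Xp_car i .
  show "unitv i \<in> Zn n" using Zn_unitv i .
  fix g y assume g: "g \<in> Zn n" and y: "y \<in> Cg g"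
  have yc: "y \<in> carrier A" using Cg_car g y .
  have xc: "Xp i \<in> carrier A" using Xp_car i .
  show "Xp i \<otimes> y \<in> Cg (zadd (unitv i) g)" unfolding Cg_def
  proof (intro CollectI conjI ballI)
    show "Xp i \<otimes> y \<in> D (zadd (unitv i) g)" using Dmult[OF Zn_unitv[OF i] g Xp_D[OF i] Cg_D[OF y]] .
    fix r assume r: "r \<in> carrier R"
    have sr: "sg g r \<in> carrier R" using sg_closed r .
    have "Xp i \<otimes> y \<otimes> rho r = Xp i \<otimes> (y \<otimes> rho r)" using xc r yc rho_car A.m_assoc by simp
    also have "\<dots> = Xp i \<otimes> (rho (sg g r) \<otimes> y)" using Cg_rho[OF y r] by simp
    also have "\<dots> = (Xp i \<otimes> rho (sg g r)) \<otimes> y" using xc sr yc rho_car A.m_assoc by simp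
    also have "\<dots> = (rho (sh i (sh i (sg g r))) \<otimes> Xp i) \<otimes> y" using Xp_rho[OF i sr] by simp
    also have "\<dots> = rho (sg (zadd (unitv i) g) r) \<otimes> (Xp i \<otimes> y)"
      using xc sr yc rho_car sh_closed i A.m_assoc sg_plus[OF i r] by simp
    finally show "Xp i \<otimes> y \<otimes> rho r = rho (sg (zadd (unitv i) g) r) \<otimes> (Xp i \<otimes> y)" .
  qed
qed

lemma Hx_Xm: assumes i: "i < n" shows "Hx (Xm i) (zneg (unitv i))"
  unfolding Hx_def
proof (intro conjI ballI)
  show "Xm i \<in> carrier A" using Xm_car i .
  show "zneg (unitv i) \<in> Zn n" using Zn_zneg[OF Zn_unitv] i .
  fix g y assume g: "g \<in> Zn n" and y: "y \<in> Cg g"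
  have yc: "y \<in> carrier A" using Cg_car g y .
  have xc: "Xm i \<in> carrier A" using Xm_car i .
  show "Xm i \<otimes> y \<in> Cg (zadd (zneg (unitv i)) g)" unfolding Cg_def
  proof (intro CollectI conjI ballI)
    show "Xm i \<otimes> y \<in> D (zadd (zneg (unitv i)) g)" using Dmult[OF Zn_zneg[OF Zn_unitv[OF i]] g Xm_D[OF i] Cg_D[OF y]] .
    fix r assume r: "r \<in> carrier R"
    have sr: "sg g r \<in> carrier R" using sg_closed r .
    have "Xm i \<otimes> y \<otimes> rho r = Xm i \<otimes> (y \<otimes> rho r)" using xc r yc rho_car A.m_assoc by simp
    also have "\<dots> = Xm i \<otimes> (rho (sg g r) \<otimes> y)" using Cg_rho[OF y r] by simp
    also have "\<dots> = (Xm i \<otimes> rho (sg g r)) \<otimes> y" using xc sr yc rho_car A.m_assoc by simp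
    also have "\<dots> = (rho (sm i (sm i (sg g r))) \<otimes> Xm i) \<otimes> y" using Xm_rho[OF i sr] by simp
    also have "\<dots> = rho (sg (zadd (zneg (unitv i)) g) r) \<otimes> (Xm i \<otimes> y)"
      using xc sr yc rho_car sm_closed i A.m_assoc sg_minus[OF i r] by simp
    finally show "Xm i \<otimes> y \<otimes> rho r = rho (sg (zadd (zneg (unitv i)) g) r) \<otimes> (Xm i \<otimes> y)" .
  qed
qed

definition Qq :: "'a \<Rightarrow> bool" where
  "Qq z \<longleftrightarrow> z \<in> carrier A \<and> Pp z \<and> (\<forall>w. Pp w \<longrightarrow> Pp (z \<otimes> w))"

lemma Hx_Qq: assumes "Hx x d" shows "Qq x"
proof -
  have x: "x \<in> carrier A" and d: "d \<in> Zn n" and H: "\<forall>g\<in>Zn n. \<forall>y\<in>Cg g. x \<otimes> y \<in> Cg (zadd d g)"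
    using assms Hx_def by auto
  have "x \<otimes> \<one> \<in> Cg (zadd d zzero)" using H one_Cg Zn_zzero by blast
  then have "x \<in> Cg d" using x by simp
  then have "Pp x" using Pp_single d by blast
  moreover have "\<forall>w. Pp w \<longrightarrow> Pp (x \<otimes> w)" using Pp_lmult[OF x d H] by blast
  ultimately show ?thesis unfolding Qq_def using x by blast
qed

lemma all_Qq: "z \<in> carrier A \<Longrightarrow> Qq z"
proof -
  assume "z \<in> carrier A"
  then have "z \<in> generate_ring A (rho ` carrier R \<union> Xp ` {..<n} \<union> Xm ` {..<n})" using gen by simp
  then show "Qq z"
  proof (induct rule: generate_ring.induct)
    case one
    have "Pp \<one>" using Pp_single[OF Zn_zzero one_Cg] .
    then show ?case unfolding Qq_def using Pp_car by simp
  next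
    case (incl h)
    then show ?case using Hx_Qq Hx_rho Hx_Xp Hx_Xm by blast
  next
    case (a_inv h)
    then have h: "h \<in> carrier A" "Pp h" "\<forall>w. Pp w \<longrightarrow> Pp (h \<otimes> w)" using Qq_def by auto
    have "\<forall>w. Pp w \<longrightarrow> Pp (\<ominus> h \<otimes> w)"
      using h Pp_car Pp_neg A.l_minus by metis
    then show ?case unfolding Qq_def using h Pp_neg by blast
  next
    case (eng_add h1 h2)
    then have h: "h1 \<in> carrier A" "Pp h1" "\<forall>w. Pp w \<longrightarrow> Pp (h1 \<otimes> w)"
      "h2 \<in> carrier A" "Pp h2" "\<forall>w. Pp w \<longrightarrow> Pp (h2 \<otimes> w)" using Qq_def by auto
    have "\<forall>w. Pp w \<longrightarrow> Pp ((h1 \<oplus> h2) \<otimes> w)"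
      using h Pp_car Pp_add A.l_distr by metis
    then show ?case unfolding Qq_def using h Pp_add by blast
  next
    case (eng_mult h1 h2)
    then have h: "h1 \<in> carrier A" "Pp h1" "\<forall>w. Pp w \<longrightarrow> Pp (h1 \<otimes> w)"
      "h2 \<in> carrier A" "Pp h2" "\<forall>w. Pp w \<longrightarrow> Pp (h2 \<otimes> w)" using Qq_def by auto
    have "\<forall>w. Pp w \<longrightarrow> Pp ((h1 \<otimes> h2) \<otimes> w)"
      using h Pp_car A.m_assoc by metis
    then show ?case unfolding Qq_def using h by blast
  qed
qed

lemma all_Pp: "z \<in> carrier A \<Longrightarrow> Pp z" using all_Qq Qq_def by blast


lemma all_Cg: assumes g: "g \<in> Zn n" and y: "y \<in> D g" shows "y \<in> Cg g"
proof -
  have yc: "y \<in> carrier A" using Dcar g y .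
  obtain S c where S: "finite S" "S \<subseteq> Zn n" "\<forall>g\<in>S. c g \<in> Cg g" "y = finsum A c S"
    using all_Pp[OF yc] unfolding Pp_def by blast
  have cc: "c \<in> S \<rightarrow> carrier A" using S Cg_car by auto
  define u where "u = (if g \<in> S then c g else \<zero>)"
  have uC: "u \<in> Cg g" using u_def S Cg_zero g by auto
  have uc: "u \<in> carrier A" using uC Cg_car g by blast
  define c' where "c' h = (if h = g then u \<ominus> y else c h)" for h
  have fS: "finite (S - {g})" using S by simp
  have cc': "c \<in> S - {g} \<rightarrow> carrier A" using cc by auto
  have F: "finsum A c' (S - {g}) = finsum A c (S - {g})"
    by (rule A.finsum_cong') (use cc' c'_def in auto)
  have Fc: "finsum A c (S - {g}) \<in> carrier A" using A.finsum_closed[OF cc'] .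
  have yS: "y = u \<oplus> finsum A c (S - {g})"
  proof (cases "g \<in> S")
    case True
    then have "S = insert g (S - {g})" by blast
    then have "finsum A c S = c g \<oplus> finsum A c (S - {g})"
      using A.finsum_insert[OF fS, of g c] cc' cc True by (metis DiffE Pi_iff singletonI)
    then show ?thesis using S(4) True u_def by simp
  next
    case False
    then show ?thesis using S(4) u_def Fc by (simp add: Diff_triv)
  qed
  have c'g: "c' g = u \<ominus> y" by (simp add: c'_def)
  have c'o: "\<And>h. h \<noteq> g \<Longrightarrow> c' h = c h" by (simp add: c'_def)
  have c'c: "c' \<in> S - {g} \<rightarrow> carrier A"
  proof (rule Pi_I)
    fix h assume "h \<in> S - {g}" then show "c' h \<in> carrier A" using cc' c'o by auto
  qed
  have ugc: "c' g \<in> carrier A" using c'g uc yc by simp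
  have ins: "insert g S = insert g (S - {g})" by blast
  have "finsum A c' (insert g S) = finsum A c' (insert g (S - {g}))" using ins by (rule arg_cong)
  also have "\<dots> = c' g \<oplus> finsum A c' (S - {g})"
    by (rule A.finsum_insert[OF fS]) (use c'c ugc in auto)
  also have "\<dots> = (u \<ominus> y) \<oplus> finsum A c (S - {g})" using F c'g by simp
  also have "\<dots> = \<zero>" unfolding yS using uc yc Fc by algebra
  finally have sum0: "finsum A c' (insert g S) = \<zero>" .
  have "c' g = \<zero>"
  proof (rule Dindep[OF _ _ _ sum0])
    show "finite (insert g S)" using S by simp
    show "insert g S \<subseteq> Zn n" using S g by simp
    show "g \<in> insert g S" by simp
    show "\<forall>h\<in>insert g S. c' h \<in> D h"
    proof
      fix h assume h: "h \<in> insert g S"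
      show "c' h \<in> D h"
      proof (cases "h = g")
        case True then show ?thesis using c'g Dminus[OF g Cg_D[OF uC] y] by simp
      next
        case False then show ?thesis using c'o h S(3) Cg_D by auto
      qed
    qed
  qed
  then have "u \<ominus> y = \<zero>" using c'g by simp
  then have "u = y" using uc yc by (simp add: A.r_right_minus_eq)
  then show ?thesis using uC by simp
qed

lemma good_nz: "good f \<Longrightarrow> s \<in> carrier R \<Longrightarrow> s \<noteq> \<zero>\<^bsub>R\<^esub> \<Longrightarrow> f s \<noteq> \<zero>\<^bsub>R\<^esub>"
proof
  assume f: "good f" and s: "s \<in> carrier R" "s \<noteq> \<zero>\<^bsub>R\<^esub>" and e: "f s = \<zero>\<^bsub>R\<^esub>"
  have i: "inj_on f (carrier R)" and z: "f \<zero>\<^bsub>R\<^esub> = \<zero>\<^bsub>R\<^esub>" using f unfolding good_def bij_betw_def by auto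
  have "s = \<zero>\<^bsub>R\<^esub>" using inj_onD[OF i _ s(1) R.zero_closed] e z by simp
  then show False using s by simp
qed
lemma sg_nz: "s \<in> carrier R \<Longrightarrow> s \<noteq> \<zero>\<^bsub>R\<^esub> \<Longrightarrow> sg g s \<noteq> \<zero>\<^bsub>R\<^esub>"
  using good_nz[OF good_sg] by blast

definition TT :: "'a set" where
  "TT = {z \<in> carrier A. \<exists>s\<in>carrier R. s \<noteq> \<zero>\<^bsub>R\<^esub> \<and> rho s \<otimes> z = \<zero>}"

lemma TT_zero: "\<zero> \<in> TT"
  unfolding TT_def
proof (intro CollectI conjI bexI)
  show "rho \<one>\<^bsub>R\<^esub> \<otimes> \<zero> = \<zero>" using rho_car[OF R.one_closed] by simp
qed (use R.one_not_zero in auto)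

lemma TT_add: assumes "z1 \<in> TT" "z2 \<in> TT" shows "z1 \<oplus> z2 \<in> TT"
proof -
  obtain s1 where s1: "s1 \<in> carrier R" "s1 \<noteq> \<zero>\<^bsub>R\<^esub>" "rho s1 \<otimes> z1 = \<zero>" "z1 \<in> carrier A"
    using assms unfolding TT_def by blast
  obtain s2 where s2: "s2 \<in> carrier R" "s2 \<noteq> \<zero>\<^bsub>R\<^esub>" "rho s2 \<otimes> z2 = \<zero>" "z2 \<in> carrier A"
    using assms unfolding TT_def by blast
  have nz: "s1 \<otimes>\<^bsub>R\<^esub> s2 \<noteq> \<zero>\<^bsub>R\<^esub>" using s1 s2 R.integral by blast
  have r1: "rho s1 \<in> carrier A" "rho s2 \<in> carrier A" using s1 s2 rho_car by auto
  have "rho (s1 \<otimes>\<^bsub>R\<^esub> s2) \<otimes> (z1 \<oplus> z2) = (rho s1 \<otimes> rho s2) \<otimes> z1 \<oplus> (rho s1 \<otimes> rho s2) \<otimes> z2"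
    using rho_mult[OF s1(1) s2(1)] r1 s1 s2 A.r_distr A.m_closed by simp
  also have "\<dots> = (rho s2 \<otimes> rho s1) \<otimes> z1 \<oplus> (rho s1 \<otimes> rho s2) \<otimes> z2"
    using rho_comm[OF s1(1) s2(1)] by simp
  also have "\<dots> = rho s2 \<otimes> (rho s1 \<otimes> z1) \<oplus> rho s1 \<otimes> (rho s2 \<otimes> z2)"
    using r1 s1 s2 by (simp add: A.m_assoc)
  also have "\<dots> = \<zero>" using s1 s2 r1 by simp
  finally show ?thesis unfolding TT_def using s1 s2 nz by blast
qed

lemma TT_neg: assumes "z \<in> TT" shows "\<ominus> z \<in> TT"
proof -
  obtain s where s: "s \<in> carrier R" "s \<noteq> \<zero>\<^bsub>R\<^esub>" "rho s \<otimes> z = \<zero>" "z \<in> carrier A"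
    using assms unfolding TT_def by blast
  have "rho s \<otimes> (\<ominus> z) = \<zero>" using s rho_car A.r_minus by simp
  then show ?thesis unfolding TT_def using s by blast
qed

lemma TT_car: "z \<in> TT \<Longrightarrow> z \<in> carrier A" by (simp add: TT_def)

lemma TT_rmult: assumes "z \<in> TT" "y \<in> carrier A" shows "z \<otimes> y \<in> TT"
proof -
  obtain s where s: "s \<in> carrier R" "s \<noteq> \<zero>\<^bsub>R\<^esub>" "rho s \<otimes> z = \<zero>" "z \<in> carrier A"
    using assms unfolding TT_def by blast
  have "rho s \<otimes> (z \<otimes> y) = (rho s \<otimes> z) \<otimes> y" using s rho_car assms by (intro A.m_assoc[symmetric]) auto
  also have "\<dots> = \<zero>" using s assms by simp
  finally have "rho s \<otimes> (z \<otimes> y) = \<zero>" .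
  then show ?thesis unfolding TT_def using s assms by blast
qed

lemma TT_lmult_Cg: assumes g: "g \<in> Zn n" and y: "y \<in> Cg g" and z: "z \<in> TT" shows "y \<otimes> z \<in> TT"
proof -
  obtain s where s: "s \<in> carrier R" "s \<noteq> \<zero>\<^bsub>R\<^esub>" "rho s \<otimes> z = \<zero>" "z \<in> carrier A"
    using assms unfolding TT_def by blast
  have yc: "y \<in> carrier A" using Cg_car g y .
  have "rho (sg g s) \<otimes> (y \<otimes> z) = (rho (sg g s) \<otimes> y) \<otimes> z"
    using s yc rho_car sg_closed A.m_assoc by simp
  also have "\<dots> = (y \<otimes> rho s) \<otimes> z" using Cg_rho[OF y s(1)] by simp
  also have "\<dots> = \<zero>" using s yc rho_car A.m_assoc by simp
  finally show ?thesis unfolding TT_def using s yc sg_closed sg_nz by blast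
qed

lemma TT_lmult: assumes y: "y \<in> carrier A" and z: "z \<in> TT" shows "y \<otimes> z \<in> TT"
proof -
  obtain S c where S: "finite S" "S \<subseteq> Zn n" "\<forall>g\<in>S. c g \<in> Cg g" "y = finsum A c S"
    using all_Pp[OF y] unfolding Pp_def by blast
  have zc: "z \<in> carrier A" using z TT_car by blast
  have "S \<subseteq> Zn n \<longrightarrow> (\<forall>g\<in>S. c g \<in> Cg g) \<longrightarrow> finsum A c S \<otimes> z \<in> TT"
    using S(1)
  proof (induct S rule: finite_induct)
    case empty then show ?case using zc TT_zero by simp
  next
    case (insert x F)
    show ?case
    proof (intro impI)
      assume a: "insert x F \<subseteq> Zn n" "\<forall>g\<in>insert x F. c g \<in> Cg g"
      have cc: "c \<in> F \<rightarrow> carrier A" "c x \<in> carrier A" using a Cg_car by auto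
      have "finsum A c (insert x F) \<otimes> z = c x \<otimes> z \<oplus> finsum A c F \<otimes> z"
        using insert cc zc A.l_distr A.finsum_closed by (simp add: A.finsum_insert)
      moreover have "c x \<otimes> z \<in> TT" using TT_lmult_Cg a z by auto
      moreover have "finsum A c F \<otimes> z \<in> TT" using insert a by auto
      ultimately show "finsum A c (insert x F) \<otimes> z \<in> TT" using TT_add by simp
    qed
  qed
  then show ?thesis using S by simp
qed

lemma TT_ideal: "ideal TT A"
proof (rule idealI[OF rA])
  show "subgroup TT (add_monoid A)"
  proof (rule A.add.subgroupI)
    show "TT \<subseteq> carrier A" using TT_car by auto
    show "TT \<noteq> {}" using TT_zero by auto
    show "\<And>a. a \<in> TT \<Longrightarrow> \<ominus> a \<in> TT" using TT_neg by simp
    show "\<And>a b. a \<in> TT \<Longrightarrow> b \<in> TT \<Longrightarrow> a \<oplus> b \<in> TT" using TT_add by simp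
  qed
  show "\<And>a x. a \<in> TT \<Longrightarrow> x \<in> carrier A \<Longrightarrow> x \<otimes> a \<in> TT" using TT_lmult by blast
  show "\<And>a x. a \<in> TT \<Longrightarrow> x \<in> carrier A \<Longrightarrow> a \<otimes> x \<in> TT" using TT_rmult by blast
qed

lemma TT_graded: "Zn_graded_ideal A n D TT"
  unfolding Zn_graded_ideal_def
proof (intro conjI allI impI ballI)
  show "ideal TT A" by (rule TT_ideal)
  fix S c g
  assume a: "finite S \<and> S \<subseteq> Zn n \<and> (\<forall>g\<in>S. c g \<in> D g) \<and> finsum A c S \<in> TT" and g: "g \<in> S"
  obtain s where s: "s \<in> carrier R" "s \<noteq> \<zero>\<^bsub>R\<^esub>" "rho s \<otimes> finsum A c S = \<zero>"
    using a TT_def by auto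
  have cc: "c \<in> S \<rightarrow> carrier A" using a Dcar by blast
  have "finsum A (\<lambda>g. rho s \<otimes> c g) S = \<zero>"
    using A.finsum_rdistr[of S "rho s" c] a s cc rho_car by simp
  moreover have "\<forall>g\<in>S. rho s \<otimes> c g \<in> D g"
    using Dmult[OF Zn_zzero _ rho_D[OF s(1)]] a by fastforce
  ultimately have "rho s \<otimes> c g = \<zero>" using Dindep[of S "\<lambda>g. rho s \<otimes> c g" g] a g by blast
  then show "c g \<in> TT" unfolding TT_def using s cc g by blast
qed

lemma TT_trivial: "TT = {\<zero>}"
proof (rule maxl[OF TT_graded])
  show "TT \<inter> D zzero = {\<zero>}"
  proof
    show "{\<zero>} \<subseteq> TT \<inter> D zzero" using TT_zero Dzero[OF Zn_zzero] by simp
    show "TT \<inter> D zzero \<subseteq> {\<zero>}"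
    proof
      fix z assume z: "z \<in> TT \<inter> D zzero"
      then obtain r where r: "r \<in> carrier R" "z = rho r" using rho_img by (metis IntD2 imageE)
      obtain s where s: "s \<in> carrier R" "s \<noteq> \<zero>\<^bsub>R\<^esub>" "rho s \<otimes> z = \<zero>"
        using z TT_def by auto
      have "rho (s \<otimes>\<^bsub>R\<^esub> r) = \<zero>" using rho_mult s r by simp
      then have "s \<otimes>\<^bsub>R\<^esub> r = \<zero>\<^bsub>R\<^esub>" using rho_eq0 s r by blast
      then have "r = \<zero>\<^bsub>R\<^esub>" using R.integral s r by blast
      then show "z \<in> {\<zero>}" using r rho_zero by simp
    qed
  qed
qed

lemma tors_rho: assumes h: "h \<in> Zn n" and x: "x \<in> D h" and u: "u \<in> carrier R" "u \<noteq> \<zero>\<^bsub>R\<^esub>"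
  and e: "x \<otimes> rho u = \<zero>" shows "x = \<zero>"
proof -
  have "rho (sg h u) \<otimes> x = \<zero>" using Cg_rho[OF all_Cg[OF h x] u(1)] e by simp
  then have "x \<in> TT" unfolding TT_def using Dcar[OF h x] sg_closed[OF u(1)] sg_nz[OF u] by blast
  then show ?thesis using TT_trivial by simp
qed

lemma sh_nz: "i < n \<Longrightarrow> r \<in> carrier R \<Longrightarrow> r \<noteq> \<zero>\<^bsub>R\<^esub> \<Longrightarrow> sh i r \<noteq> \<zero>\<^bsub>R\<^esub>"
  using good_sh unfolding good_def bij_betw_def by (metis R.zero_closed inj_onD)
lemma sm_nz: "i < n \<Longrightarrow> r \<in> carrier R \<Longrightarrow> r \<noteq> \<zero>\<^bsub>R\<^esub> \<Longrightarrow> sm i r \<noteq> \<zero>\<^bsub>R\<^esub>"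
  using good_sm unfolding good_def bij_betw_def by (metis R.zero_closed inj_onD)

lemma tors_Xp: assumes h: "h \<in> Zn n" and x: "x \<in> D h" and i: "i < n" and e: "x \<otimes> Xp i = \<zero>"
  shows "x = \<zero>"
proof (rule tors_rho[OF h x])
  show "sh i (t i) \<in> carrier R" using sh_closed i tcar by simp
  show "sh i (t i) \<noteq> \<zero>\<^bsub>R\<^esub>" using sh_nz i tcar tnz by simp
  have "x \<otimes> rho (sh i (t i)) = x \<otimes> (Xp i \<otimes> Xm i)" using XpXm i by simp
  also have "\<dots> = (x \<otimes> Xp i) \<otimes> Xm i" using Dcar[OF h x] Xp_car Xm_car i A.m_assoc by simp
  also have "\<dots> = \<zero>" using e Xm_car i by simp
  finally show "x \<otimes> rho (sh i (t i)) = \<zero>" .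
qed

lemma tors_Xm: assumes h: "h \<in> Zn n" and x: "x \<in> D h" and i: "i < n" and e: "x \<otimes> Xm i = \<zero>"
  shows "x = \<zero>"
proof (rule tors_rho[OF h x])
  show "sm i (t i) \<in> carrier R" using sm_closed i tcar by simp
  show "sm i (t i) \<noteq> \<zero>\<^bsub>R\<^esub>" using sm_nz i tcar tnz by simp
  have "x \<otimes> rho (sm i (t i)) = x \<otimes> (Xm i \<otimes> Xp i)" using XmXp i by simp
  also have "\<dots> = (x \<otimes> Xm i) \<otimes> Xp i" using Dcar[OF h x] Xp_car Xm_car i A.m_assoc by simp
  also have "\<dots> = \<zero>" using e Xp_car i by simp
  finally show "x \<otimes> rho (sm i (t i)) = \<zero>" .
qed


lemma zadd_comm: "zadd a b = zadd b a" by (auto simp: zadd_def)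

lemma one_nz: "\<one> \<noteq> \<zero>"
proof
  assume "\<one> = \<zero>"
  then have "rho \<one>\<^bsub>R\<^esub> = \<zero>" using rho_one by simp
  then show False using rho_eq0[OF R.one_closed] R.one_not_zero by blast
qed

lemma step:
  assumes g': "g' \<in> Zn n" and d: "d \<in> Zn n" and Xa: "Xa \<in> D d" and Xb: "Xb \<in> D (zneg d)"
    and tX: "\<forall>h\<in>Zn n. \<forall>x\<in>D h. x \<otimes> Xa = \<zero> \<longrightarrow> x = \<zero>"
    and tX': "\<forall>h\<in>Zn n. \<forall>x\<in>D h. x \<otimes> Xb = \<zero> \<longrightarrow> x = \<zero>"
    and IH: "\<exists>Y\<in>D (zneg g'). \<exists>Z\<in>D g'. Z \<noteq> \<zero> \<and> (\<forall>h\<in>Zn n. \<forall>x\<in>D h. x \<otimes> Y = \<zero> \<longrightarrow> x = \<zero>)"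
  shows "\<exists>Y\<in>D (zneg (zadd g' d)). \<exists>Z\<in>D (zadd g' d). Z \<noteq> \<zero> \<and> (\<forall>h\<in>Zn n. \<forall>x\<in>D h. x \<otimes> Y = \<zero> \<longrightarrow> x = \<zero>)"
proof -
  obtain Y Z where Y: "Y \<in> D (zneg g')" and Z: "Z \<in> D g'" "Z \<noteq> \<zero>"
    and tY: "\<forall>h\<in>Zn n. \<forall>x\<in>D h. x \<otimes> Y = \<zero> \<longrightarrow> x = \<zero>" using IH by blast
  have nd: "zneg d \<in> Zn n" and ng: "zneg g' \<in> Zn n" using Zn_zneg d g' by auto
  have Xc: "Xa \<in> carrier A" "Xb \<in> carrier A" "Y \<in> carrier A" using Dcar d Xa nd Xb ng Y by auto
  have "Z \<otimes> Xa \<in> D (zadd g' d)" using Dmult[OF g' d Z(1) Xa] .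
  moreover have "Z \<otimes> Xa \<noteq> \<zero>" using tX g' Z by blast
  moreover have "Xb \<otimes> Y \<in> D (zneg (zadd g' d))"
    using Dmult[OF nd ng Xb Y] by (simp add: zneg_zadd zadd_comm)
  moreover have "\<forall>h\<in>Zn n. \<forall>x\<in>D h. x \<otimes> (Xb \<otimes> Y) = \<zero> \<longrightarrow> x = \<zero>"
  proof (intro ballI impI)
    fix h x assume h: "h \<in> Zn n" and x: "x \<in> D h" and e: "x \<otimes> (Xb \<otimes> Y) = \<zero>"
    have xc: "x \<in> carrier A" using Dcar h x .
    have "(x \<otimes> Xb) \<otimes> Y = \<zero>" using e xc Xc by (simp add: A.m_assoc)
    moreover have "x \<otimes> Xb \<in> D (zadd h (zneg d))" using Dmult[OF h nd x Xb] .
    moreover have "zadd h (zneg d) \<in> Zn n" using Zn_zadd h nd by blast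
    ultimately have "x \<otimes> Xb = \<zero>" using tY by blast
    then show "x = \<zero>" using tX' h x by blast
  qed
  ultimately show ?thesis by blast
qed

lemma exYZ: "g \<in> Zn n \<Longrightarrow> \<exists>Y\<in>D (zneg g). \<exists>Z\<in>D g. Z \<noteq> \<zero> \<and> (\<forall>h\<in>Zn n. \<forall>x\<in>D h. x \<otimes> Y = \<zero> \<longrightarrow> x = \<zero>)"
proof (induct "\<Sum>i<n. nat \<bar>g i\<bar>" arbitrary: g rule: less_induct)
  case less
  show ?case
  proof (cases "\<forall>i<n. g i = 0")
    case True
    then have "g = zzero" using less(2) unfolding Zn_def zzero_def
      by (metis (mono_tags, lifting) mem_Collect_eq not_le ext)
    moreover have "\<forall>h\<in>Zn n. \<forall>x\<in>D h. x \<otimes> \<one> = \<zero> \<longrightarrow> x = \<zero>" using Dcar by auto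
    ultimately show ?thesis using one_D one_nz by auto
  next
    case False
    then obtain i where i: "i < n" "g i \<noteq> 0" by blast
    have u: "unitv i \<in> Zn n" "zneg (unitv i) \<in> Zn n" using Zn_unitv Zn_zneg i by auto
    show ?thesis
    proof (cases "g i > 0")
      case True
      define g' where "g' = zadd g (zneg (unitv i))"
      have g': "g' \<in> Zn n" using g'_def Zn_zadd less(2) u by blast
      have ge: "g = zadd g' (unitv i)" by (auto simp: g'_def zadd_def zneg_def)
      have lt: "(\<Sum>i<n. nat \<bar>g' i\<bar>) < (\<Sum>i<n. nat \<bar>g i\<bar>)"
      proof (rule sum_strict_mono_ex1)
        show "finite {..<n}" by simp
        show "\<forall>x\<in>{..<n}. nat \<bar>g' x\<bar> \<le> nat \<bar>g x\<bar>"
          using True by (auto simp: g'_def zadd_def zneg_def unitv_def)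
        show "\<exists>a\<in>{..<n}. nat \<bar>g' a\<bar> < nat \<bar>g a\<bar>"
          using True i by (auto simp: g'_def zadd_def zneg_def unitv_def intro!: bexI[of _ i])
      qed
      have "\<exists>Y\<in>D (zneg (zadd g' (unitv i))). \<exists>Z\<in>D (zadd g' (unitv i)). Z \<noteq> \<zero> \<and> (\<forall>h\<in>Zn n. \<forall>x\<in>D h. x \<otimes> Y = \<zero> \<longrightarrow> x = \<zero>)"
        by (rule step[OF g' u(1) Xp_D[OF i(1)] Xm_D[OF i(1)]]) (use tors_Xp tors_Xm i less(1)[OF lt g'] in auto)
      then show ?thesis using ge by simp
    next
      case False
      then have neg: "g i < 0" using i by simp
      define g' where "g' = zadd g (unitv i)"
      have g': "g' \<in> Zn n" using g'_def Zn_zadd less(2) u by blast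
      have ge: "g = zadd g' (zneg (unitv i))" by (auto simp: g'_def zadd_def zneg_def)
      have lt: "(\<Sum>i<n. nat \<bar>g' i\<bar>) < (\<Sum>i<n. nat \<bar>g i\<bar>)"
      proof (rule sum_strict_mono_ex1)
        show "finite {..<n}" by simp
        show "\<forall>x\<in>{..<n}. nat \<bar>g' x\<bar> \<le> nat \<bar>g x\<bar>"
          using neg by (auto simp: g'_def zadd_def zneg_def unitv_def)
        show "\<exists>a\<in>{..<n}. nat \<bar>g' a\<bar> < nat \<bar>g a\<bar>"
          using neg i by (auto simp: g'_def zadd_def zneg_def unitv_def intro!: bexI[of _ i])
      qed
      have zz: "zneg (zneg (unitv i)) = unitv i" by (auto simp: zneg_def)
      have "\<exists>Y\<in>D (zneg (zadd g' (zneg (unitv i)))). \<exists>Z\<in>D (zadd g' (zneg (unitv i))). Z \<noteq> \<zero> \<and> (\<forall>h\<in>Zn n. \<forall>x\<in>D h. x \<otimes> Y = \<zero> \<longrightarrow> x = \<zero>)"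
        by (rule step[OF g' u(2) Xm_D[OF i(1)]]) (use tors_Xp tors_Xm i less(1)[OF lt g'] Xp_D[OF i(1)] zz in auto)
      then show ?thesis using ge by simp
    qed
  qed
qed

end

context tgwa begin

lemma lmd: "x \<in> carrier A \<Longrightarrow> y \<in> carrier A \<Longrightarrow> z \<in> carrier A \<Longrightarrow> (x \<ominus> y) \<otimes> z = x \<otimes> z \<ominus> y \<otimes> z"
  by (simp add: a_minus_def A.l_distr A.l_minus)

lemma rho_neg: "r \<in> carrier R \<Longrightarrow> rho (\<ominus>\<^bsub>R\<^esub> r) = \<ominus> rho r"
proof -
  assume r: "r \<in> carrier R"
  have "rho (\<ominus>\<^bsub>R\<^esub> r) \<oplus> rho r = \<zero>" using rho_add[of "\<ominus>\<^bsub>R\<^esub> r" r] r rho_zero by (simp add: R.l_neg)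
  then show ?thesis using A.minus_equality rho_car r by (metis R.a_inv_closed)
qed

lemma uniqL: assumes a: "a \<in> carrier A" "a \<noteq> \<zero>" and s: "s1 \<in> carrier R" "s2 \<in> carrier R"
  and e: "rho s1 \<otimes> a = rho s2 \<otimes> a" shows "s1 = s2"
proof (rule ccontr)
  assume ne: "s1 \<noteq> s2"
  define d where "d = s1 \<ominus>\<^bsub>R\<^esub> s2"
  have dc: "d \<in> carrier R" using d_def s by simp
  have dnz: "d \<noteq> \<zero>\<^bsub>R\<^esub>" using ne s d_def R.r_right_minus_eq by simp
  have "rho d = rho s1 \<ominus> rho s2" using d_def rho_add rho_neg s by (simp add: a_minus_def)
  then have "rho d \<otimes> a = rho s1 \<otimes> a \<ominus> rho s2 \<otimes> a" using a s rho_car by (simp add: lmd)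
  then have "rho d \<otimes> a = \<zero>" using e a s rho_car by simp
  then have "a \<in> TT" unfolding TT_def using a dc dnz by blast
  then show False using TT_trivial a by simp
qed

lemma cryst_g: assumes g: "g \<in> Zn n" and pd: "principal_domain R"
  shows "\<exists>a\<in>D g. (\<forall>x\<in>D g. \<exists>!r. r \<in> D zzero \<and> x = r \<otimes> a) \<and> (\<forall>x\<in>D g. \<exists>!r. r \<in> D zzero \<and> x = a \<otimes> r)"
proof -
  obtain Y Z where Y: "Y \<in> D (zneg g)" and Z: "Z \<in> D g" "Z \<noteq> \<zero>"
    and tY: "\<forall>h\<in>Zn n. \<forall>x\<in>D h. x \<otimes> Y = \<zero> \<longrightarrow> x = \<zero>" using exYZ[OF g] by blast
  have ng: "zneg g \<in> Zn n" using Zn_zneg g .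
  have Yc: "Y \<in> carrier A" using Dcar ng Y .
  have img: "\<And>x. x \<in> D g \<Longrightarrow> \<exists>r\<in>carrier R. x \<otimes> Y = rho r"
  proof -
    fix x assume x: "x \<in> D g"
    have "x \<otimes> Y \<in> D zzero" using Dmult[OF g ng x Y] by simp
    then show "\<exists>r\<in>carrier R. x \<otimes> Y = rho r" using rho_img by (metis imageE)
  qed
  define I where "I = {r \<in> carrier R. \<exists>x\<in>D g. rho r = x \<otimes> Y}"
  have "ideal I R"
  proof (rule idealI[OF rR])
    show "subgroup I (add_monoid R)"
    proof (rule R.add.subgroupI)
      show "I \<subseteq> carrier R" using I_def by auto
      have "\<zero>\<^bsub>R\<^esub> \<in> I" unfolding I_def using rho_zero Dzero[OF g] Yc by force
      then show "I \<noteq> {}" by auto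
      fix a assume "a \<in> I"
      then obtain x where a: "a \<in> carrier R" "x \<in> D g" "rho a = x \<otimes> Y" unfolding I_def by blast
      have xc: "x \<in> carrier A" using Dcar g a(2) .
      have "rho (\<ominus>\<^bsub>R\<^esub> a) = (\<ominus> x) \<otimes> Y" using rho_neg a xc Yc A.l_minus by simp
      then show "\<ominus>\<^bsub>R\<^esub> a \<in> I" unfolding I_def using a Dneg[OF g a(2)] by auto
    next
      fix a b assume "a \<in> I" "b \<in> I"
      then obtain x y where a: "a \<in> carrier R" "x \<in> D g" "rho a = x \<otimes> Y"
        and b: "b \<in> carrier R" "y \<in> D g" "rho b = y \<otimes> Y" unfolding I_def by blast
      have xc: "x \<in> carrier A" "y \<in> carrier A" using Dcar g a(2) b(2) by auto
      have "rho (a \<oplus>\<^bsub>R\<^esub> b) = (x \<oplus> y) \<otimes> Y" using rho_add a b xc Yc A.l_distr by simp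
      then show "a \<oplus>\<^bsub>R\<^esub> b \<in> I" unfolding I_def using a b Dadd[OF g a(2) b(2)] by auto
    qed
  next
    fix a s assume "a \<in> I" and s: "s \<in> carrier R"
    then obtain x where a: "a \<in> carrier R" "x \<in> D g" "rho a = x \<otimes> Y" unfolding I_def by blast
    have xc: "x \<in> carrier A" using Dcar g a(2) .
    have "rho s \<otimes> x \<in> D g" using Dmult[OF Zn_zzero g rho_D[OF s] a(2)] by simp
    moreover have "rho (s \<otimes>\<^bsub>R\<^esub> a) = (rho s \<otimes> x) \<otimes> Y"
      using rho_mult s a xc Yc rho_car by (simp add: A.m_assoc)
    ultimately show "s \<otimes>\<^bsub>R\<^esub> a \<in> I" "a \<otimes>\<^bsub>R\<^esub> s \<in> I" unfolding I_def using s a R.m_comm by auto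
  qed
  then obtain c where c: "c \<in> carrier R" "I = PIdl\<^bsub>R\<^esub> c"
    using principal_domain.exists_gen[OF pd] by blast
  have cI: "c \<in> I" using c R.l_one unfolding cgenideal_def by (metis (mono_tags, lifting) R.one_closed mem_Collect_eq)
  then obtain a where a: "a \<in> D g" "rho c = a \<otimes> Y" unfolding I_def by blast
  have ac: "a \<in> carrier A" using Dcar g a(1) .
  have Irep: "\<And>x. x \<in> D g \<Longrightarrow> \<exists>k\<in>carrier R. x = rho k \<otimes> a"
  proof -
    fix x assume x: "x \<in> D g"
    have xc: "x \<in> carrier A" using Dcar g x .
    obtain r where r: "r \<in> carrier R" "x \<otimes> Y = rho r" using img x by blast
    then have "r \<in> I" unfolding I_def using x r(2)[symmetric] by auto
    then obtain k where k: "k \<in> carrier R" "r = k \<otimes>\<^bsub>R\<^esub> c" using c unfolding cgenideal_def by blast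
    have km: "rho k \<otimes> a \<in> D g" using Dmult[OF Zn_zzero g rho_D[OF k(1)] a(1)] by simp
    have kc: "rho k \<otimes> a \<in> carrier A" using Dcar g km .
    have "(x \<ominus> rho k \<otimes> a) \<otimes> Y = x \<otimes> Y \<ominus> (rho k \<otimes> a) \<otimes> Y"
      using xc kc Yc by (simp add: lmd)
    also have "(rho k \<otimes> a) \<otimes> Y = rho r"
      using k a ac Yc rho_car rho_mult c(1) by (simp add: A.m_assoc)
    finally have "(x \<ominus> rho k \<otimes> a) \<otimes> Y = \<zero>" using r xc rho_car by simp
    then have "x \<ominus> rho k \<otimes> a = \<zero>" using tY g Dminus[OF g x km] by blast
    then have "x = rho k \<otimes> a" using xc kc by simp
    then show "\<exists>k\<in>carrier R. x = rho k \<otimes> a" using k by blast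
  qed
  have anz: "a \<noteq> \<zero>"
  proof
    assume a0: "a = \<zero>"
    obtain k where "k \<in> carrier R" "Z = rho k \<otimes> a" using Irep Z(1) by blast
    then have "Z = \<zero>" using a0 rho_car by simp
    then show False using Z by simp
  qed
  have aC: "a \<in> Cg g" using all_Cg g a(1) by blast
  have sgs: "sg g ` carrier R = carrier R" using good_sg[of g] unfolding good_def bij_betw_def by blast
  have sgi: "inj_on (sg g) (carrier R)" using good_sg[of g] unfolding good_def bij_betw_def by blast
  show ?thesis
  proof (intro bexI[OF _ a(1)] conjI ballI)
    fix x assume x: "x \<in> D g"
    obtain k where k: "k \<in> carrier R" "x = rho k \<otimes> a" using Irep x by blast
    show "\<exists>!r. r \<in> D zzero \<and> x = r \<otimes> a"
    proof (rule ex1I[of _ "rho k"])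
      show "rho k \<in> D zzero \<and> x = rho k \<otimes> a" using k rho_D by simp
      fix r assume r: "r \<in> D zzero \<and> x = r \<otimes> a"
      then obtain s where s: "s \<in> carrier R" "r = rho s" using rho_img by (metis imageE)
      have "s = k" using uniqL[OF ac anz s(1) k(1)] r s k by simp
      then show "r = rho k" using s by simp
    qed
  next
    fix x assume x: "x \<in> D g"
    obtain k where k: "k \<in> carrier R" "x = rho k \<otimes> a" using Irep x by blast
    obtain s where s: "s \<in> carrier R" "k = sg g s" using sgs k(1) by (metis imageE)
    have xs: "x = a \<otimes> rho s" using Cg_rho[OF aC s(1)] k s by simp
    show "\<exists>!r. r \<in> D zzero \<and> x = a \<otimes> r"
    proof (rule ex1I[of _ "rho s"])
      show "rho s \<in> D zzero \<and> x = a \<otimes> rho s" using s rho_D xs by simp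
      fix r assume r: "r \<in> D zzero \<and> x = a \<otimes> r"
      then obtain s' where s': "s' \<in> carrier R" "r = rho s'" using rho_img by (metis imageE)
      have "rho (sg g s') \<otimes> a = rho (sg g s) \<otimes> a"
        using Cg_rho[OF aC s'(1)] Cg_rho[OF aC s(1)] r s' xs by simp
      then have "sg g s' = sg g s" using uniqL[OF ac anz] sg_closed s s' by blast
      then have "s' = s" using sgi s s' inj_onD by metis
      then show "r = rho s" using s' by simp
    qed
  qed
qed

end

theorem mainTheorem8:
  fixes K :: "('k, 'd) ring_scheme"
    and R :: "('r, 'c) ring_scheme"
    and A :: "('a, 'b) ring_scheme"
    and hK :: "'k \<Rightarrow> 'r"
    and n :: nat
    and sh :: "nat \<Rightarrow> 'r \<Rightarrow> 'r"
    and t :: "nat \<Rightarrow> 'r"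
    and D :: "(nat \<Rightarrow> int) \<Rightarrow> 'a set"
    and rho :: "'r \<Rightarrow> 'a"
    and Xp Xm :: "nat \<Rightarrow> 'a"
  assumes "TGW_datum K R hK n sh t"
    and "principal_domain R"
    and "\<forall>i<n. t i \<noteq> \<zero>\<^bsub>R\<^esub>"
    and "TGW_consistent R n sh t"
    and "is_TGWA A D rho Xp Xm R n sh t"
  shows "crystalline_graded A (Zn n) zzero D"
proof -
  note d0 = assms(1)[unfolded TGW_datum_def]
  note d4 = d0[THEN conjunct2, THEN conjunct2, THEN conjunct2, THEN conjunct2]
  have iso: "\<forall>i<n. sh i \<in> ring_iso R R" using d4 by (rule conjunct1)
  note d6 = d4[THEN conjunct2, THEN conjunct2]
  have cm: "\<forall>i<n. \<forall>j<n. \<forall>r\<in>carrier R. sh i (sh j r) = sh j (sh i r)" using d6 by (rule conjunct1)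
  have tc: "\<forall>i<n. t i \<in> carrier R" using d6[THEN conjunct2] by blast
  have dom: "domain R" using assms(2) by (rule principal_domain.axioms(1))
  interpret T: tgwa R n sh A D rho Xp Xm t
    by (rule tgwa.intro[OF tgw.intro[OF dom iso cm]]) (rule tgwa_axioms.intro[OF assms(5) assms(3) tc])
  show ?thesis unfolding crystalline_graded_def
    using T.cryst_g[OF _ assms(2)] by blast
qed

end
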